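(* Let $D=(V,E;s,t)$, $N$ be as in the context and let $\widetilde\Gamma_D=(N,\tilde\gamma)$ be the auxiliary game. Then $\mathcal{C}(\widetilde\Gamma_D)$ is the convex hull of the incidence vectors (in $\mathbb{R}^N$) of the minimum $s$-$t$ cuts constrained to $N$.
   Context: $D=(V,E;s,t)$ is a directed network with unit arc capacities (parallel arcs allowed); $N\subseteq E$ is the set of private arcs (players), $M=E\setminus N$ public arcs; every $s$-$t$ path contains an arc of $N$ and every arc lies on some $s$-$t$ path. For $S\subseteq N$, $\gamma(S)$ is the maximum number of pairwise arc-disjoint $s$-$t$ paths in $D_S=(V,S\cup M;s,t)$. $\sigma_N$ is the maximum number of $s$-$t$ paths pairwise sharing no arc of $N$. An $s$-$t$ cut constrained to $N$ is a set of arcs contained in $N$ meeting every $s$-$t$ path; it is minimum if of minimum cardinality. The auxiliary game $\widetilde\Gamma_D=(N,\tilde\gamma)$ has $\tilde\gamma(N)=\sigma_N$ and $\tilde\gamma(S)=\gamma(S)$ for $S\subsetneq N$. $\mathcal{C}(\widetilde\Gamma_D)=\{x\in\mathbb{R}^N_{\ge0}:x(N)=\sigma_N,\ x(S)\ge\tilde\gamma(S)\ \forall S\subseteq N\}$, where $x(S)=\sum_{i\in S}x_i$. *)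

theory Defs
  imports "HOL-Analysis.Analysis"
begin

text \<open>A directed multigraph: arcs of type 'e, each arc a has tail src a and head trg a.
  Parallel arcs are distinct elements of 'e with the same endpoints.\<close>

definition path_vertices :: "('e \<Rightarrow> 'v) \<Rightarrow> ('e \<Rightarrow> 'v) \<Rightarrow> 'e list \<Rightarrow> 'v list" where
  "path_vertices src trg p = map src p @ [trg (last p)]"

definition is_st_path :: "('e \<Rightarrow> 'v) \<Rightarrow> ('e \<Rightarrow> 'v) \<Rightarrow> 'v \<Rightarrow> 'v \<Rightarrow> 'e set \<Rightarrow> 'e list \<Rightarrow> bool" where
  "is_st_path src trg s t F p \<longleftrightarrow>
     p \<noteq> [] \<and> set p \<subseteq> F \<and> src (hd p) = s \<and> trg (last p) = t \<and>
     (\<forall>i. Suc i < length p \<longrightarrow> trg (p ! i) = src (p ! Suc i)) \<and>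
     distinct (path_vertices src trg p)"

definition st_paths :: "('e \<Rightarrow> 'v) \<Rightarrow> ('e \<Rightarrow> 'v) \<Rightarrow> 'v \<Rightarrow> 'v \<Rightarrow> 'e set \<Rightarrow> 'e list set" where
  "st_paths src trg s t F = {p. is_st_path src trg s t F p}"

definition gamma :: "('e \<Rightarrow> 'v) \<Rightarrow> ('e \<Rightarrow> 'v) \<Rightarrow> 'v \<Rightarrow> 'v \<Rightarrow> 'e set \<Rightarrow> 'e set \<Rightarrow> 'e set \<Rightarrow> nat" where
  "gamma src trg s t E N S =
     Max {card P | P. P \<subseteq> st_paths src trg s t (S \<union> (E - N)) \<and>
                      pairwise (\<lambda>p q. set p \<inter> set q = {}) P}"

definition sigmaN :: "('e \<Rightarrow> 'v) \<Rightarrow> ('e \<Rightarrow> 'v) \<Rightarrow> 'v \<Rightarrow> 'v \<Rightarrow> 'e set \<Rightarrow> 'e set \<Rightarrow> nat" where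
  "sigmaN src trg s t E N =
     Max {card P | P. P \<subseteq> st_paths src trg s t E \<and>
                      pairwise (\<lambda>p q. set p \<inter> set q \<inter> N = {}) P}"

definition gamma_tilde :: "('e \<Rightarrow> 'v) \<Rightarrow> ('e \<Rightarrow> 'v) \<Rightarrow> 'v \<Rightarrow> 'v \<Rightarrow> 'e set \<Rightarrow> 'e set \<Rightarrow> 'e set \<Rightarrow> nat" where
  "gamma_tilde src trg s t E N S =
     (if S = N then sigmaN src trg s t E N else gamma src trg s t E N S)"

definition is_cut_N :: "('e \<Rightarrow> 'v) \<Rightarrow> ('e \<Rightarrow> 'v) \<Rightarrow> 'v \<Rightarrow> 'v \<Rightarrow> 'e set \<Rightarrow> 'e set \<Rightarrow> 'e set \<Rightarrow> bool" where
  "is_cut_N src trg s t E N C \<longleftrightarrow>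
     C \<subseteq> N \<and> (\<forall>p \<in> st_paths src trg s t E. set p \<inter> C \<noteq> {})"

definition is_min_cut_N :: "('e \<Rightarrow> 'v) \<Rightarrow> ('e \<Rightarrow> 'v) \<Rightarrow> 'v \<Rightarrow> 'v \<Rightarrow> 'e set \<Rightarrow> 'e set \<Rightarrow> 'e set \<Rightarrow> bool" where
  "is_min_cut_N src trg s t E N C \<longleftrightarrow>
     is_cut_N src trg s t E N C \<and>
     (\<forall>C'. is_cut_N src trg s t E N C' \<longrightarrow> card C \<le> card C')"

text \<open>The core of the auxiliary game; vectors in R^N are vectors in real^'e (arc type finite) vanishing outside N.\<close>
definition core_tilde :: "('e::finite \<Rightarrow> 'v) \<Rightarrow> ('e \<Rightarrow> 'v) \<Rightarrow> 'v \<Rightarrow> 'v \<Rightarrow> 'e set \<Rightarrow> 'e set \<Rightarrow> (real ^ 'e) set" where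
  "core_tilde src trg s t E N =
     {x. (\<forall>i. i \<notin> N \<longrightarrow> x $ i = 0) \<and> (\<forall>i\<in>N. 0 \<le> x $ i) \<and>
         (\<Sum>i\<in>N. x $ i) = real (sigmaN src trg s t E N) \<and>
         (\<forall>S. S \<subseteq> N \<longrightarrow> (\<Sum>i\<in>S. x $ i) \<ge> real (gamma_tilde src trg s t E N S))}"

definition incidence_vec :: "'e::finite set \<Rightarrow> real ^ 'e" where
  "incidence_vec C = (\<chi> i. if i \<in> C then 1 else 0)"

end

theory Submission
  imports Defs
begin

definition cu :: "('a \<Rightarrow> 'v) \<Rightarrow> ('a \<Rightarrow> 'v) \<Rightarrow> 'a set \<Rightarrow> 'a \<Rightarrow> 'v" where
  "cu src trg R a = (if a \<in> R then trg a else src a)"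
definition nx :: "('a \<Rightarrow> 'v) \<Rightarrow> ('a \<Rightarrow> 'v) \<Rightarrow> 'a set \<Rightarrow> 'a \<Rightarrow> 'v" where
  "nx src trg R a = (if a \<in> R then src a else trg a)"

lemma cu_empty[simp]: "cu src trg {} a = src a" by (simp add: cu_def)
lemma nx_empty[simp]: "nx src trg {} a = trg a" by (simp add: nx_def)
lemma nx_empty_fun[simp]: "nx src trg {} = trg" by (simp add: fun_eq_iff)

fun gw :: "('a \<Rightarrow> 'v) \<Rightarrow> ('a \<Rightarrow> 'v) \<Rightarrow> 'a set \<Rightarrow> 'a set \<Rightarrow> 'v \<Rightarrow> 'v \<Rightarrow> 'a list \<Rightarrow> bool" where
  "gw src trg F R u v [] \<longleftrightarrow> u = v"
| "gw src trg F R u v (a # p) \<longleftrightarrow> a \<in> F \<and> cu src trg R a = u \<and> gw src trg F R (nx src trg R a) v p"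

lemma gw_set: "gw src trg F R u v p \<Longrightarrow> set p \<subseteq> F"
  by (induction p arbitrary: u) auto

lemma gw_mono: "gw src trg F R u v p \<Longrightarrow> F \<subseteq> F' \<Longrightarrow> gw src trg F' R u v p"
  by (induction p arbitrary: u) auto

lemma gw_subset: "gw src trg F R u v p \<Longrightarrow> set p \<subseteq> F' \<Longrightarrow> gw src trg F' R u v p"
  by (induction p arbitrary: u) auto

lemma gw_append: "gw src trg F R u v p \<Longrightarrow> gw src trg F R v w q \<Longrightarrow> gw src trg F R u w (p @ q)"
  by (induction p arbitrary: u) auto

lemma gw_snoc: "gw src trg F R u v p \<Longrightarrow> a \<in> F \<Longrightarrow> cu src trg R a = v \<Longrightarrow> gw src trg F R u (nx src trg R a) (p @ [a])"
  by (induction p arbitrary: u) auto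

lemma gw_drop_Suc: "gw src trg F R u v p \<Longrightarrow> k < length p \<Longrightarrow> gw src trg F R (nx src trg R (p ! k)) v (drop (Suc k) p)"
proof (induction p arbitrary: u k)
  case Nil then show ?case by simp
next
  case (Cons a p) then show ?case by (cases k) auto
qed

lemma gw_drop: "gw src trg F R u v p \<Longrightarrow> k < length p \<Longrightarrow> gw src trg F R (cu src trg R (p ! k)) v (drop k p)"
proof (induction p arbitrary: u k)
  case Nil then show ?case by simp
next
  case (Cons a p) then show ?case by (cases k) auto
qed

lemma gw_simple:
  "gw src trg F R u v p \<Longrightarrow> \<exists>q. gw src trg F R u v q \<and> set q \<subseteq> set p \<and> distinct (u # map (nx src trg R) q)"
proof (induction p arbitrary: u)
  case Nil then show ?case by (intro exI[of _ "[]"]) simp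
next
  case (Cons a p)
  then have a: "a \<in> F" "cu src trg R a = u" and w: "gw src trg F R (nx src trg R a) v p" by auto
  from Cons.IH[OF w] obtain q where q: "gw src trg F R (nx src trg R a) v q" "set q \<subseteq> set p"
    "distinct (nx src trg R a # map (nx src trg R) q)" by blast
  show ?case
  proof (cases "u \<in> set (nx src trg R a # map (nx src trg R) q)")
    case False
    then show ?thesis using q a by (intro exI[of _ "a # q"]) auto
  next
    case True
    then show ?thesis
    proof (cases "u = nx src trg R a")
      case True
      then show ?thesis using q by (intro exI[of _ q]) auto
    next
      case False
      with True obtain k where k: "k < length q" "nx src trg R (q ! k) = u"
        by (auto simp: in_set_conv_nth)
      have w2: "gw src trg F R u v (drop (Suc k) q)" using gw_drop_Suc[OF q(1) k(1)] k(2) by simp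
      have "distinct (map (nx src trg R) q)" using q(3) by simp
      then have "distinct (drop k (map (nx src trg R) q))" by (rule distinct_drop)
      moreover have "drop k (map (nx src trg R) q) = u # map (nx src trg R) (drop (Suc k) q)"
        using k by (metis Cons_nth_drop_Suc drop_map list.simps(9))
      ultimately have "distinct (u # map (nx src trg R) (drop (Suc k) q))" by simp
      moreover have "set (drop (Suc k) q) \<subseteq> set (a # p)" using q(2) set_drop_subset by fastforce
      ultimately show ?thesis using w2 by blast
    qed
  qed
qed

lemma gw_cross: "gw src trg F R u v p \<Longrightarrow> u \<in> A \<Longrightarrow> v \<notin> A \<Longrightarrow> \<exists>a\<in>set p. cu src trg R a \<in> A \<and> nx src trg R a \<notin> A"
  by (induction p arbitrary: u) auto

lemma gw_tele:
  "gw src trg F R u v p \<Longrightarrow>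
   (\<Sum>a\<leftarrow>p. (if cu src trg R a = w then 1 else 0) - (if nx src trg R a = w then 1 else 0) :: int)
     = (if u = w then 1 else 0) - (if v = w then 1 else 0)"
  by (induction p arbitrary: u) auto

lemma distinct_nx: "distinct (u # map (nx src trg R) q) \<Longrightarrow> distinct q"
  by (simp add: distinct_map)

lemma gw_iff:
  "p \<noteq> [] \<Longrightarrow> gw src trg F {} u v p \<longleftrightarrow>
     set p \<subseteq> F \<and> src (hd p) = u \<and> trg (last p) = v \<and> (\<forall>i. Suc i < length p \<longrightarrow> trg (p ! i) = src (p ! Suc i))"
proof (induction p arbitrary: u)
  case Nil then show ?case by simp
next
  case (Cons a p)
  show ?case
  proof (cases "p = []")
    case True then show ?thesis by auto
  next
    case False
    have "gw src trg F {} u v (a # p) \<longleftrightarrow> a \<in> F \<and> src a = u \<and> gw src trg F {} (trg a) v p" by simp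
    also have "\<dots> \<longleftrightarrow> a \<in> F \<and> src a = u \<and> (set p \<subseteq> F \<and> src (hd p) = trg a \<and> trg (last p) = v \<and> (\<forall>i. Suc i < length p \<longrightarrow> trg (p ! i) = src (p ! Suc i)))"
      using Cons.IH[OF False] by simp
    also have "\<dots> \<longleftrightarrow> set (a#p) \<subseteq> F \<and> src (hd (a#p)) = u \<and> trg (last (a#p)) = v \<and> (\<forall>i. Suc i < length (a#p) \<longrightarrow> trg ((a#p) ! i) = src ((a#p) ! Suc i))"
    proof -
      have "(\<forall>i. Suc i < length (a#p) \<longrightarrow> trg ((a#p) ! i) = src ((a#p) ! Suc i)) \<longleftrightarrow>
            trg a = src (hd p) \<and> (\<forall>i. Suc i < length p \<longrightarrow> trg (p ! i) = src (p ! Suc i))"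
        (is "?L \<longleftrightarrow> ?R")
      proof
        assume L: ?L
        have "trg a = src (hd p)" using L[rule_format, of 0] False by (simp add: hd_conv_nth)
        moreover have "\<forall>i. Suc i < length p \<longrightarrow> trg (p ! i) = src (p ! Suc i)"
          using L by (metis Suc_less_eq length_Cons nth_Cons_Suc)
        ultimately show ?R by simp
      next
        assume R: ?R
        show ?L
        proof (intro allI impI)
          fix i assume "Suc i < length (a#p)"
          then show "trg ((a#p) ! i) = src ((a#p) ! Suc i)"
            using R False by (cases i) (auto simp: hd_conv_nth)
        qed
      qed
      then show ?thesis using False by auto
    qed
    finally show ?thesis .
  qed
qed

lemma pv_eq: "gw src trg F {} u v p \<Longrightarrow> p \<noteq> [] \<Longrightarrow> path_vertices src trg p = u # map trg p"
proof (induction p arbitrary: u)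
  case Nil then show ?case by simp
next
  case (Cons a p)
  show ?case
  proof (cases "p = []")
    case True then show ?thesis using Cons by (simp add: path_vertices_def)
  next
    case False
    then have "path_vertices src trg p = trg a # map trg p" using Cons by simp
    then show ?thesis using Cons False by (simp add: path_vertices_def)
  qed
qed

lemma st_path_iff:
  "is_st_path src trg s t F p \<longleftrightarrow> p \<noteq> [] \<and> gw src trg F {} s t p \<and> distinct (s # map trg p)"
proof
  assume H: "is_st_path src trg s t F p"
  then have ne: "p \<noteq> []" by (simp add: is_st_path_def)
  have g: "gw src trg F {} s t p" using H gw_iff[OF ne, of src trg F s t] by (simp add: is_st_path_def)
  show "p \<noteq> [] \<and> gw src trg F {} s t p \<and> distinct (s # map trg p)"
    using H ne g pv_eq[OF g ne] by (simp add: is_st_path_def)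
next
  assume H: "p \<noteq> [] \<and> gw src trg F {} s t p \<and> distinct (s # map trg p)"
  then show "is_st_path src trg s t F p"
    using gw_iff[of p src trg F s t] pv_eq[of src trg F s t p] by (simp add: is_st_path_def)
qed


definition hh :: "('a \<Rightarrow> 'v) \<Rightarrow> ('a \<Rightarrow> 'v) \<Rightarrow> 'v \<Rightarrow> 'a \<Rightarrow> int" where
  "hh src trg w a = (if src a = w then 1 else 0) - (if trg a = w then 1 else 0)"

definition exc :: "('a \<Rightarrow> 'v) \<Rightarrow> ('a \<Rightarrow> 'v) \<Rightarrow> 'a set \<Rightarrow> 'v \<Rightarrow> int" where
  "exc src trg \<Phi> w = (\<Sum>a\<in>\<Phi>. hh src trg w a)"

definition djl :: "'a list list \<Rightarrow> bool" where
  "djl ps \<longleftrightarrow> (\<forall>i<length ps. \<forall>k<length ps. i \<noteq> k \<longrightarrow> set (ps ! i) \<inter> set (ps ! k) = {})"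

lemma djl_Nil[simp]: "djl []" by (simp add: djl_def)

lemma djl_Cons: "djl (q # ps) \<longleftrightarrow> djl ps \<and> (\<forall>p\<in>set ps. set q \<inter> set p = {})"
proof
  assume H: "djl (q # ps)"
  have "djl ps" unfolding djl_def
  proof (intro allI impI)
    fix i k assume "i < length ps" "k < length ps" "i \<noteq> k"
    then show "set (ps ! i) \<inter> set (ps ! k) = {}" using H[unfolded djl_def, rule_format, of "Suc i" "Suc k"] by simp
  qed
  moreover have "\<forall>p\<in>set ps. set q \<inter> set p = {}"
  proof
    fix p assume "p \<in> set ps"
    then obtain k where "k < length ps" "p = ps ! k" by (auto simp: in_set_conv_nth)
    then show "set q \<inter> set p = {}" using H[unfolded djl_def, rule_format, of 0 "Suc k"] by simp
  qed
  ultimately show "djl ps \<and> (\<forall>p\<in>set ps. set q \<inter> set p = {})" by simp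
next
  assume H: "djl ps \<and> (\<forall>p\<in>set ps. set q \<inter> set p = {})"
  show "djl (q # ps)" unfolding djl_def
  proof (intro allI impI)
    fix i k assume "i < length (q#ps)" "k < length (q#ps)" "i \<noteq> k"
    then show "set ((q#ps) ! i) \<inter> set ((q#ps) ! k) = {}"
    proof (cases i)
      case 0
      then obtain k' where "k = Suc k'" using \<open>i \<noteq> k\<close> by (cases k) auto
      then show ?thesis using H 0 \<open>k < length (q#ps)\<close> by simp
    next
      case (Suc i')
      show ?thesis
      proof (cases k)
        case 0
        then show ?thesis using H Suc \<open>i < length (q#ps)\<close> by (auto simp: Int_commute)
      next
        case (Suc k')
        then show ?thesis using H \<open>i = Suc i'\<close> \<open>i < length (q#ps)\<close> \<open>k < length (q#ps)\<close> \<open>i \<noteq> k\<close>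
          unfolding djl_def by simp
      qed
    qed
  qed
qed

lemma cut_sum:
  assumes "finite \<Phi>"
  shows "(\<Sum>a\<in>\<Phi>. (if src a \<in> A then 1 else 0) - (if trg a \<in> A then 1 else 0) :: int)
       = (\<Sum>w\<in>A \<inter> (src ` \<Phi> \<union> trg ` \<Phi>). exc src trg \<Phi> w)"
proof -
  let ?V = "A \<inter> (src ` \<Phi> \<union> trg ` \<Phi>)"
  have fV: "finite ?V" using assms by simp
  have "(\<Sum>w\<in>?V. exc src trg \<Phi> w) = (\<Sum>a\<in>\<Phi>. \<Sum>w\<in>?V. hh src trg w a)"
    unfolding exc_def by (rule sum.swap)
  also have "\<dots> = (\<Sum>a\<in>\<Phi>. (if src a \<in> A then 1 else 0) - (if trg a \<in> A then 1 else 0))"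
  proof (rule sum.cong[OF refl])
    fix a assume a: "a \<in> \<Phi>"
    have "(\<Sum>w\<in>?V. hh src trg w a) = (\<Sum>w\<in>?V. if src a = w then 1 else 0) - (\<Sum>w\<in>?V. if trg a = w then 1 else 0)"
      unfolding hh_def by (simp add: sum_subtractf)
    also have "\<dots> = (if src a \<in> A then 1 else 0) - (if trg a \<in> A then 1 else 0)"
      using a fV by (simp add: sum.delta)
    finally show "(\<Sum>w\<in>?V. hh src trg w a) = (if src a \<in> A then 1 else 0) - (if trg a \<in> A then 1 else 0)" .
  qed
  finally show ?thesis by simp
qed

lemma exc_outside: "w \<notin> src ` \<Phi> \<union> trg ` \<Phi> \<Longrightarrow> exc src trg \<Phi> w = 0"
  unfolding exc_def hh_def by (rule sum.neutral) auto

lemma exc_cut: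
  assumes "finite \<Phi>" "s \<in> A" "t \<notin> A" "\<forall>w. w \<noteq> s \<and> w \<noteq> t \<longrightarrow> exc src trg \<Phi> w = 0"
  shows "exc src trg \<Phi> s = (\<Sum>a\<in>\<Phi>. (if src a \<in> A then 1 else 0) - (if trg a \<in> A then 1 else 0) :: int)"
proof -
  let ?V = "A \<inter> (src ` \<Phi> \<union> trg ` \<Phi>)"
  have "(\<Sum>w\<in>?V. exc src trg \<Phi> w) = (\<Sum>w\<in>?V. if w = s then exc src trg \<Phi> s else 0)"
    using assms by (intro sum.cong) auto
  also have "\<dots> = exc src trg \<Phi> s"
    using assms exc_outside[of s src \<Phi> trg] by (simp add: sum.delta')
  finally show ?thesis using cut_sum[OF assms(1), of src A trg] by simp
qed

lemma exc_remove_path: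
  assumes "finite \<Phi>" "gw src trg \<Phi> {} s t q" "distinct q"
  shows "exc src trg (\<Phi> - set q) w = exc src trg \<Phi> w - ((if s = w then 1 else 0) - (if t = w then 1 else 0))"
proof -
  have sub: "set q \<subseteq> \<Phi>" using gw_set[OF assms(2)] .
  have "exc src trg (\<Phi> - set q) w = exc src trg \<Phi> w - (\<Sum>a\<in>set q. hh src trg w a)"
    unfolding exc_def using sub assms(1) by (simp add: sum_diff)
  moreover have "(\<Sum>a\<in>set q. hh src trg w a) = (\<Sum>a\<leftarrow>q. hh src trg w a)"
    using assms(3) by (simp add: sum_list_distinct_conv_sum_set)
  moreover have "(\<Sum>a\<leftarrow>q. hh src trg w a) = (if s = w then 1 else 0) - (if t = w then 1 else 0)"
    using gw_tele[OF assms(2), of w] unfolding hh_def by simp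
  ultimately show ?thesis by simp
qed

lemma decomp:
  assumes "finite \<Phi>" "s \<noteq> t" "exc src trg \<Phi> s = int j" "\<forall>w. w \<noteq> s \<and> w \<noteq> t \<longrightarrow> exc src trg \<Phi> w = 0"
  shows "\<exists>ps. length ps = j \<and> (\<forall>q\<in>set ps. gw src trg \<Phi> {} s t q \<and> distinct (s # map trg q)) \<and> djl ps"
  using assms
proof (induction j arbitrary: \<Phi>)
  case 0 then show ?case by (intro exI[of _ "[]"]) simp
next
  case (Suc j)
  let ?A = "{w. \<exists>p. gw src trg \<Phi> {} s w p}"
  have sA: "s \<in> ?A" by (auto intro: exI[of _ "[]"])
  have tA: "t \<in> ?A"
  proof (rule ccontr)
    assume tn: "t \<notin> ?A"
    have "exc src trg \<Phi> s = (\<Sum>a\<in>\<Phi>. (if src a \<in> ?A then 1 else 0) - (if trg a \<in> ?A then 1 else 0) :: int)"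
      using exc_cut[OF Suc.prems(1) sA tn] Suc.prems by blast
    also have "\<dots> \<le> 0"
    proof (rule sum_nonpos)
      fix a assume a: "a \<in> \<Phi>"
      have "src a \<in> ?A \<Longrightarrow> trg a \<in> ?A"
      proof -
        assume "src a \<in> ?A"
        then obtain p where "gw src trg \<Phi> {} s (src a) p" by blast
        from gw_snoc[OF this a] have "gw src trg \<Phi> {} s (trg a) (p @ [a])" by simp
        then show ?thesis by blast
      qed
      then show "(if src a \<in> ?A then 1 else 0) - (if trg a \<in> ?A then 1 else 0) \<le> (0::int)" by auto
    qed
    finally show False using Suc.prems(3) by simp
  qed
  then obtain p where "gw src trg \<Phi> {} s t p" by blast
  from gw_simple[OF this] obtain q where q: "gw src trg \<Phi> {} s t q" "distinct (s # map trg q)"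
    by auto
  have dq: "distinct q" using q(2) by (simp add: distinct_map)
  let ?P = "\<Phi> - set q"
  have e: "\<And>w. exc src trg ?P w = exc src trg \<Phi> w - ((if s = w then 1 else 0) - (if t = w then 1 else 0))"
    using exc_remove_path[OF Suc.prems(1) q(1) dq] by blast
  have "exc src trg ?P s = int j" using e[of s] Suc.prems by simp
  moreover have "\<forall>w. w \<noteq> s \<and> w \<noteq> t \<longrightarrow> exc src trg ?P w = 0" using e Suc.prems by simp
  ultimately obtain ps where ps: "length ps = j" "\<forall>q\<in>set ps. gw src trg ?P {} s t q \<and> distinct (s # map trg q)" "djl ps"
    using Suc.IH[of ?P] Suc.prems by auto
  have "\<forall>p\<in>set ps. set q \<inter> set p = {}" using ps(2) gw_set by fastforce
  moreover have "\<forall>p\<in>set ps. gw src trg \<Phi> {} s t p" using ps(2) gw_mono by (metis Diff_subset)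
  ultimately show ?case using ps q by (intro exI[of _ "q # ps"]) (auto simp: djl_Cons)
qed


lemma mfmc:
  assumes fin: "finite F" and st: "s \<noteq> t"
  shows "\<exists>A ps. s \<in> A \<and> t \<notin> A \<and> length ps = card {a\<in>F. src a \<in> A \<and> trg a \<notin> A} \<and>
           (\<forall>q\<in>set ps. gw src trg F {} s t q \<and> distinct (s # map trg q)) \<and> djl ps"
proof -
  let ?Fl = "{\<Phi>. \<Phi> \<subseteq> F \<and> (\<forall>w. w \<noteq> s \<and> w \<noteq> t \<longrightarrow> exc src trg \<Phi> w = 0)}"
  have fFl: "finite ?Fl" using fin by (rule finite_subset[rotated, OF finite_Pow_iff[THEN iffD2]]) auto
  have e0: "{} \<in> ?Fl" by (simp add: exc_def)
  define m where "m = Max ((\<lambda>\<Phi>. exc src trg \<Phi> s) ` ?Fl)"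
  have "m \<in> (\<lambda>\<Phi>. exc src trg \<Phi> s) ` ?Fl" unfolding m_def using fFl e0 by (intro Max_in) auto
  then obtain \<Phi> where \<Phi>: "\<Phi> \<in> ?Fl" "exc src trg \<Phi> s = m" by blast
  have mx: "\<And>\<Psi>. \<Psi> \<in> ?Fl \<Longrightarrow> exc src trg \<Psi> s \<le> m" unfolding m_def using fFl by (intro Max_ge) auto
  have m0: "0 \<le> m" using mx[OF e0] by (simp add: exc_def)
  have fP: "finite \<Phi>" using \<Phi>(1) fin finite_subset by blast
  have PF: "\<Phi> \<subseteq> F" using \<Phi>(1) by blast
  have cons: "\<forall>w. w \<noteq> s \<and> w \<noteq> t \<longrightarrow> exc src trg \<Phi> w = 0" using \<Phi>(1) by blast
  define A where "A = {w. \<exists>p. gw src trg F \<Phi> s w p}"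
  have sA: "s \<in> A" unfolding A_def by (auto intro: exI[of _ "[]"])
  have ext: "\<And>a. a \<in> F \<Longrightarrow> cu src trg \<Phi> a \<in> A \<Longrightarrow> nx src trg \<Phi> a \<in> A"
  proof -
    fix a assume a: "a \<in> F" "cu src trg \<Phi> a \<in> A"
    then obtain p where "gw src trg F \<Phi> s (cu src trg \<Phi> a) p" unfolding A_def by blast
    from gw_snoc[OF this a(1) refl] show "nx src trg \<Phi> a \<in> A" unfolding A_def by blast
  qed
  have tA: "t \<notin> A"
  proof
    assume "t \<in> A"
    then obtain p where "gw src trg F \<Phi> s t p" unfolding A_def by blast
    from gw_simple[OF this] obtain q where q: "gw src trg F \<Phi> s t q" "distinct (s # map (nx src trg \<Phi>) q)"
      by blast
    have dq: "distinct q" using q(2) by (simp add: distinct_map)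
    have qF: "set q \<subseteq> F" using gw_set[OF q(1)] .
    let ?Q = "set q"
    define \<Phi>' where "\<Phi>' = (\<Phi> - ?Q) \<union> (?Q - \<Phi>)"
    have fQ: "finite ?Q" by simp
    have key: "\<And>w. exc src trg \<Phi>' w = exc src trg \<Phi> w + ((if s = w then 1 else 0) - (if t = w then 1 else 0))"
    proof -
      fix w
      let ?h = "hh src trg w"
      have tl: "(\<Sum>a\<leftarrow>q. (if cu src trg \<Phi> a = w then 1 else 0) - (if nx src trg \<Phi> a = w then 1 else 0) :: int)
          = (if s = w then 1 else 0) - (if t = w then 1 else 0)" by (rule gw_tele[OF q(1)])
      have "(\<Sum>a\<leftarrow>q. (if cu src trg \<Phi> a = w then 1 else 0) - (if nx src trg \<Phi> a = w then 1 else 0) :: int)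
          = (\<Sum>a\<in>?Q. if a \<in> \<Phi> then - ?h a else ?h a)"
        using dq by (simp add: sum_list_distinct_conv_sum_set cu_def nx_def hh_def) (intro sum.cong, auto simp: hh_def)
      also have "\<dots> = (\<Sum>a\<in>?Q \<inter> \<Phi>. - ?h a) + (\<Sum>a\<in>?Q - \<Phi>. ?h a)"
        using fQ by (simp add: sum.If_cases Diff_eq)
      finally have t2: "(\<Sum>a\<in>?Q - \<Phi>. ?h a) - (\<Sum>a\<in>?Q \<inter> \<Phi>. ?h a) = (if s = w then 1 else 0) - (if t = w then 1 else 0)"
        using tl by (simp add: sum_negf)
      have "exc src trg \<Phi>' w = (\<Sum>a\<in>\<Phi> - ?Q. ?h a) + (\<Sum>a\<in>?Q - \<Phi>. ?h a)"
        unfolding exc_def \<Phi>'_def using fP by (intro sum.union_disjoint) auto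
      moreover have "exc src trg \<Phi> w = (\<Sum>a\<in>\<Phi> - ?Q. ?h a) + (\<Sum>a\<in>?Q \<inter> \<Phi>. ?h a)"
      proof -
        have "\<Phi> - ?Q \<inter> \<Phi> = \<Phi> - ?Q" by blast
        then show ?thesis unfolding exc_def using fP sum.subset_diff[of "?Q \<inter> \<Phi>" \<Phi> ?h] by simp
      qed
      ultimately show "exc src trg \<Phi>' w = exc src trg \<Phi> w + ((if s = w then 1 else 0) - (if t = w then 1 else 0))"
        using t2 by simp
    qed
    have "\<Phi>' \<subseteq> F" using PF qF unfolding \<Phi>'_def by blast
    moreover have "\<forall>w. w \<noteq> s \<and> w \<noteq> t \<longrightarrow> exc src trg \<Phi>' w = 0" using key cons by simp
    ultimately have "\<Phi>' \<in> ?Fl" by blast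
    from mx[OF this] have "exc src trg \<Phi>' s \<le> m" .
    moreover have "exc src trg \<Phi>' s = m + 1" using key[of s] st \<Phi>(2) by simp
    ultimately show False by simp
  qed
  let ?D = "{a\<in>F. src a \<in> A \<and> trg a \<notin> A}"
  have fwd: "\<And>a. a \<in> F \<Longrightarrow> a \<notin> \<Phi> \<Longrightarrow> src a \<in> A \<Longrightarrow> trg a \<in> A"
    using ext by (metis cu_def nx_def)
  have bwd: "\<And>a. a \<in> \<Phi> \<Longrightarrow> trg a \<in> A \<Longrightarrow> src a \<in> A"
    using ext PF by (metis cu_def nx_def subsetD)
  have DP: "?D \<subseteq> \<Phi>" using fwd by blast
  have "m = (\<Sum>a\<in>\<Phi>. (if src a \<in> A then 1 else 0) - (if trg a \<in> A then 1 else 0) :: int)"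
    using exc_cut[OF fP sA tA cons] \<Phi>(2) by simp
  also have "\<dots> = (\<Sum>a\<in>\<Phi>. if a \<in> ?D then 1 else 0)"
    using bwd PF by (intro sum.cong) auto
  also have "\<dots> = int (card ?D)"
    using fP DP by (simp add: sum.If_cases Int_absorb1)
  finally have mD: "m = int (card ?D)" .
  obtain ps where ps: "length ps = card ?D" "\<forall>q\<in>set ps. gw src trg \<Phi> {} s t q \<and> distinct (s # map trg q)" "djl ps"
    using decomp[OF fP st, of src trg "card ?D"] \<Phi>(2) mD cons by auto
  have "\<forall>q\<in>set ps. gw src trg F {} s t q \<and> distinct (s # map trg q)"
    using ps(2) gw_mono[OF _ PF] by metis
  then show ?thesis using ps(1,3) sA tA by blast
qed


lemma gw_map: "gw (src \<circ> f) (trg \<circ> f) F {} u v q \<Longrightarrow> gw src trg (f ` F) {} u v (map f q)"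
  by (induction q arbitrary: u) auto

lemma st_paths_mono: "F \<subseteq> F' \<Longrightarrow> st_paths src trg s t F \<subseteq> st_paths src trg s t F'"
  unfolding st_paths_def is_st_path_def by auto

lemma st_path_distinct: "p \<in> st_paths src trg s t F \<Longrightarrow> distinct p"
  unfolding st_paths_def st_path_iff by (simp add: distinct_map)

lemma finite_st_paths: "finite (st_paths src trg s t (F :: 'e::finite set))"
proof -
  have "st_paths src trg s t F \<subseteq> {xs. set xs \<subseteq> (UNIV :: 'e set) \<and> length xs \<le> card (UNIV :: 'e set)}"
  proof
    fix p assume "p \<in> st_paths src trg s t F"
    then have dp: "distinct p" by (rule st_path_distinct)
    have "length p \<le> card (UNIV :: 'e set)" using distinct_card[OF dp] card_mono[OF finite_class.finite_UNIV subset_UNIV, of "set p"] by linarith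
    then show "p \<in> {xs. set xs \<subseteq> (UNIV :: 'e set) \<and> length xs \<le> card (UNIV :: 'e set)}" by simp
  qed
  then show ?thesis by (rule finite_subset) (rule finite_lists_length_le, simp)
qed

lemma weak_dual:
  assumes "finite C" "\<forall>p\<in>P. set p \<inter> C \<noteq> {}" "pairwise (\<lambda>p q. set p \<inter> set q \<inter> C = {}) P"
  shows "card P \<le> card C"
proof -
  define f where "f p = (SOME a. a \<in> set p \<inter> C)" for p
  have f: "\<And>p. p \<in> P \<Longrightarrow> f p \<in> set p \<inter> C"
  proof -
    fix p assume "p \<in> P"
    then have "\<exists>a. a \<in> set p \<inter> C" using assms(2) by blast
    then show "f p \<in> set p \<inter> C" unfolding f_def by (rule someI_ex)
  qed
  have "inj_on f P"
  proof (rule inj_onI)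
    fix p q assume "p \<in> P" "q \<in> P" "f p = f q"
    then have "f p \<in> set p \<inter> set q \<inter> C" using f[of p] f[of q] by auto
    then show "p = q" using assms(3) \<open>p \<in> P\<close> \<open>q \<in> P\<close> unfolding pairwise_def by blast
  qed
  moreover have "f ` P \<subseteq> C" using f by blast
  ultimately show ?thesis using card_inj_on_le assms(1) by blast
qed


lemma inc_nth[simp]: "incidence_vec C $ i = (if i \<in> C then 1 else 0)"
  by (simp add: incidence_vec_def)

lemma sum_ind: "finite A \<Longrightarrow> (\<Sum>i\<in>A. if i \<in> B then 1 else 0 :: real) = real (card (A \<inter> B))"
  by (simp add: sum.If_cases Int_def)

context
  fixes src trg :: "'e::finite \<Rightarrow> 'v" and s t :: 'v and E N :: "'e set"
  assumes st: "s \<noteq> t" and NE: "N \<subseteq> E"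
    and meetN: "\<forall>p \<in> st_paths src trg s t E. set p \<inter> N \<noteq> {}"
begin

abbreviation "SP \<equiv> st_paths src trg s t E"
abbreviation "sig \<equiv> sigmaN src trg s t E N"

lemma sig_set_finite:
  "finite {card P | P. P \<subseteq> SP \<and> pairwise (\<lambda>p q. set p \<inter> set q \<inter> N = {}) P}"
proof -
  have "{card P | P. P \<subseteq> SP \<and> pairwise (\<lambda>p q. set p \<inter> set q \<inter> N = {}) P} \<subseteq> {..card SP}"
  proof
    fix x assume "x \<in> {card P | P. P \<subseteq> SP \<and> pairwise (\<lambda>p q. set p \<inter> set q \<inter> N = {}) P}"
    then obtain P where "x = card P" "P \<subseteq> SP" by blast
    from \<open>P \<subseteq> SP\<close> have "card P \<le> card SP" by (rule card_mono[OF finite_st_paths])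
    then show "x \<in> {..card SP}" using \<open>x = card P\<close> by simp
  qed
  then show ?thesis by (rule finite_subset) simp
qed

lemma sig_ge: "P \<subseteq> SP \<Longrightarrow> pairwise (\<lambda>p q. set p \<inter> set q \<inter> N = {}) P \<Longrightarrow> card P \<le> sig"
  unfolding sigmaN_def by (rule Max_ge[OF sig_set_finite]) blast

lemma sig_att: "\<exists>P. P \<subseteq> SP \<and> pairwise (\<lambda>p q. set p \<inter> set q \<inter> N = {}) P \<and> card P = sig"
proof -
  have "sig \<in> {card P | P. P \<subseteq> SP \<and> pairwise (\<lambda>p q. set p \<inter> set q \<inter> N = {}) P}"
  proof -
    have "(0::nat) \<in> {card P | P. P \<subseteq> SP \<and> pairwise (\<lambda>p q. set p \<inter> set q \<inter> N = {}) P}"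
      by (rule CollectI, rule exI[of _ "{}"], simp)
    then have "{card P | P. P \<subseteq> SP \<and> pairwise (\<lambda>p q. set p \<inter> set q \<inter> N = {}) P} \<noteq> {}"
      by (metis empty_iff)
    then show ?thesis unfolding sigmaN_def by (rule Max_in[OF sig_set_finite])
  qed
  then have "\<exists>P. sig = card P \<and> P \<subseteq> SP \<and> pairwise (\<lambda>p q. set p \<inter> set q \<inter> N = {}) P"
    by (simp only: mem_Collect_eq)
  then show ?thesis by metis
qed

lemma cut_ge: "is_cut_N src trg s t E N C \<Longrightarrow> sig \<le> card C"
proof -
  assume c: "is_cut_N src trg s t E N C"
  obtain P where P: "P \<subseteq> SP" "pairwise (\<lambda>p q. set p \<inter> set q \<inter> N = {}) P" "card P = sig"
    using sig_att by blast
  have "\<forall>p\<in>P. set p \<inter> C \<noteq> {}" using c P(1) unfolding is_cut_N_def by blast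
  moreover have "pairwise (\<lambda>p q. set p \<inter> set q \<inter> C = {}) P"
    using P(2) c unfolding pairwise_def is_cut_N_def by blast
  ultimately show ?thesis using weak_dual[of C P] P(3) by simp
qed

lemma gamma_le:
  assumes c: "is_cut_N src trg s t E N C" and S: "S \<subseteq> N"
  shows "gamma src trg s t E N S \<le> card (C \<inter> S)"
proof -
  let ?G = "{card P | P. P \<subseteq> st_paths src trg s t (S \<union> (E - N)) \<and> pairwise (\<lambda>p q. set p \<inter> set q = {}) P}"
  have b: "\<forall>x\<in>?G. x \<le> card (C \<inter> S)"
  proof
    fix x assume "x \<in> ?G"
    then obtain P where P: "x = card P" "P \<subseteq> st_paths src trg s t (S \<union> (E - N))" "pairwise (\<lambda>p q. set p \<inter> set q = {}) P"
      by blast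
    have "\<forall>p\<in>P. set p \<inter> (C \<inter> S) \<noteq> {}"
    proof
      fix p assume p: "p \<in> P"
      then have p1: "p \<in> st_paths src trg s t (S \<union> (E - N))" using P(2) by blast
      then have sp: "set p \<subseteq> S \<union> (E - N)" unfolding st_paths_def is_st_path_def by blast
      have sE: "S \<union> (E - N) \<subseteq> E" using S NE by blast
      have "p \<in> SP" using subsetD[OF st_paths_mono[OF sE] p1] .
      then have "set p \<inter> C \<noteq> {}" using c unfolding is_cut_N_def by blast
      then show "set p \<inter> (C \<inter> S) \<noteq> {}" using sp c unfolding is_cut_N_def by blast
    qed
    moreover have "pairwise (\<lambda>p q. set p \<inter> set q \<inter> (C \<inter> S) = {}) P" using P(3) unfolding pairwise_def by blast
    ultimately show "x \<le> card (C \<inter> S)" using weak_dual[of "C \<inter> S" P] P(1) by simp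
  qed
  have fin: "finite ?G" by (rule finite_subset[of _ "{..card (C \<inter> S)}"]) (use b in auto)
  have "0 \<in> ?G" by (rule CollectI, rule exI[of _ "{}"], simp)
  then have ne: "?G \<noteq> {}" by (metis empty_iff)
  show ?thesis unfolding gamma_def by (subst Max_le_iff[OF fin ne]) (rule b)
qed


lemma menger: "\<exists>C. is_cut_N src trg s t E N C \<and> card C \<le> sig"
proof -
  define K where "K = card N + 1"
  define F' where "F' = {(a, i). a \<in> E \<and> (if a \<in> N then i = 0 else i < K)}"
  have F'sub: "F' \<subseteq> UNIV \<times> {..<K}" unfolding F'_def K_def by auto
  have fF': "finite F'" by (rule finite_subset[OF F'sub]) simp
  have F'N: "\<And>a i. (a, i) \<in> F' \<Longrightarrow> a \<in> N \<Longrightarrow> i = 0" unfolding F'_def by auto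
  have F'E: "fst ` F' \<subseteq> E" unfolding F'_def by auto
  from mfmc[OF fF' st, of "src \<circ> fst" "trg \<circ> fst"]
  obtain A ps where mf: "s \<in> A" "t \<notin> A"
    "length ps = card {a\<in>F'. (src \<circ> fst) a \<in> A \<and> (trg \<circ> fst) a \<notin> A}"
    "\<forall>q\<in>set ps. gw (src \<circ> fst) (trg \<circ> fst) F' {} s t q \<and> distinct (s # map (trg \<circ> fst) q)"
    "djl ps" by blast
  define D' where "D' = {a\<in>F'. (src \<circ> fst) a \<in> A \<and> (trg \<circ> fst) a \<notin> A}"
  define j where "j = length ps"
  have jD: "j = card D'" unfolding j_def D'_def using mf(3) .
  define qs where "qs = map (map fst) ps"
  have lq: "length qs = j" unfolding qs_def j_def by simp
  have qsp: "qs ! i \<in> SP" if i: "i < j" for i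
  proof -
    have q: "ps ! i \<in> set ps" using i unfolding j_def by simp
    then have g: "gw (src \<circ> fst) (trg \<circ> fst) F' {} s t (ps ! i)" and d: "distinct (s # map (trg \<circ> fst) (ps ! i))"
      using mf(4) by blast+
    have g2: "gw src trg E {} s t (qs ! i)"
      using gw_mono[OF gw_map[OF g] F'E] i unfolding qs_def j_def by simp
    have ne: "qs ! i \<noteq> []"
    proof
      assume "qs ! i = []"
      then show False using g2 st by simp
    qed
    have "distinct (s # map trg (qs ! i))" using d i unfolding qs_def j_def by simp
    then show ?thesis using g2 ne unfolding st_paths_def st_path_iff by simp
  qed
  have ndisj: "set (qs ! i) \<inter> set (qs ! k) \<inter> N = {}" if ik: "i < j" "k < j" "i \<noteq> k" for i k
  proof (rule ccontr)
    assume "set (qs ! i) \<inter> set (qs ! k) \<inter> N \<noteq> {}"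
    then obtain a where a: "a \<in> set (map fst (ps ! i))" "a \<in> set (map fst (ps ! k))" "a \<in> N"
      using ik unfolding qs_def j_def by auto
    from a(1) obtain n1 where n1: "(a, n1) \<in> set (ps ! i)" by auto
    from a(2) obtain n2 where n2: "(a, n2) \<in> set (ps ! k)" by auto
    have gi: "set (ps ! i) \<subseteq> F'" using mf(4) ik(1) gw_set unfolding j_def by (metis nth_mem)
    have gk: "set (ps ! k) \<subseteq> F'" using mf(4) ik(2) gw_set unfolding j_def by (metis nth_mem)
    have "n1 = 0" using F'N[of a n1] n1 gi a(3) by blast
    moreover have "n2 = 0" using F'N[of a n2] n2 gk a(3) by blast
    ultimately have "(a, 0) \<in> set (ps ! i) \<inter> set (ps ! k)" using n1 n2 by simp
    moreover have "set (ps ! i) \<inter> set (ps ! k) = {}" using mf(5) ik unfolding djl_def j_def by blast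
    ultimately show False by blast
  qed
  have meet: "set (qs ! i) \<inter> N \<noteq> {}" if "i < j" for i using meetN qsp[OF that] by blast
  have jN: "j \<le> card N"
  proof -
    define f where "f i = (SOME a. a \<in> set (qs ! i) \<inter> N)" for i
    have f: "f i \<in> set (qs ! i) \<inter> N" if "i < j" for i
      unfolding f_def using meet[OF that] by (metis some_in_eq)
    have "inj_on f {..<j}"
    proof (rule inj_onI)
      fix i k assume "i \<in> {..<j}" "k \<in> {..<j}" "f i = f k"
      then show "i = k" using f[of i] f[of k] ndisj[of i k] by auto
    qed
    moreover have "f ` {..<j} \<subseteq> N" using f by auto
    ultimately have "card {..<j} \<le> card N" by (intro card_inj_on_le) auto
    then show ?thesis by simp
  qed
  have fD: "finite D'" unfolding D'_def using fF' by simp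
  have noM: "\<not> (src a \<in> A \<and> trg a \<notin> A)" if a: "a \<in> E" "a \<notin> N" for a
  proof
    assume c: "src a \<in> A \<and> trg a \<notin> A"
    have "(\<lambda>i. (a, i)) ` {..<K} \<subseteq> D'" unfolding D'_def F'_def using a c by auto
    moreover have "inj_on (\<lambda>i. (a, i)) {..<K}" by (auto intro: inj_onI)
    ultimately have "card {..<K} \<le> card D'" using fD by (intro card_inj_on_le) auto
    then show False using jD jN unfolding K_def by simp
  qed
  define C where "C = {a\<in>N. src a \<in> A \<and> trg a \<notin> A}"
  have DC: "D' = (\<lambda>a. (a, 0)) ` C"
  proof
    show "D' \<subseteq> (\<lambda>a. (a, 0)) ` C"
    proof
      fix b assume b: "b \<in> D'"
      obtain a i where ai: "b = (a, i)" by (cases b)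
      have aE: "a \<in> E" and cr: "src a \<in> A \<and> trg a \<notin> A" using b ai unfolding D'_def F'_def by auto
      have aN: "a \<in> N" using noM[OF aE] cr by blast
      have "i = 0" using b ai aN unfolding D'_def F'_def by auto
      then show "b \<in> (\<lambda>a. (a, 0)) ` C" using ai aN cr unfolding C_def by auto
    qed
  next
    show "(\<lambda>a. (a, 0)) ` C \<subseteq> D'" unfolding D'_def F'_def C_def using NE by auto
  qed
  have cC: "card C = j" using jD DC by (simp add: card_image inj_on_def)
  have cut: "is_cut_N src trg s t E N C"
    unfolding is_cut_N_def
  proof
    show "C \<subseteq> N" unfolding C_def by auto
    show "\<forall>p\<in>SP. set p \<inter> C \<noteq> {}"
    proof
      fix p assume "p \<in> SP"
      then have g: "gw src trg E {} s t p" unfolding st_paths_def st_path_iff by simp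
      obtain a where a: "a \<in> set p" "src a \<in> A" "trg a \<notin> A" using gw_cross[OF g mf(1,2)] by auto
      have "a \<in> E" using gw_set[OF g] a(1) by blast
      then have "a \<in> N" using noM a by blast
      then show "set p \<inter> C \<noteq> {}" using a unfolding C_def by blast
    qed
  qed
  have dq: "distinct qs"
  proof (subst distinct_conv_nth, intro allI impI)
    fix i k assume "i < length qs" "k < length qs" "i \<noteq> k"
    then show "qs ! i \<noteq> qs ! k" using ndisj[of i k] meet[of i] lq by auto
  qed
  have "card (set qs) \<le> sig"
  proof (rule sig_ge)
    show "set qs \<subseteq> SP" using qsp lq by (auto simp: in_set_conv_nth)
    show "pairwise (\<lambda>p q. set p \<inter> set q \<inter> N = {}) (set qs)"
      unfolding pairwise_def
    proof (intro ballI impI)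
      fix p q assume "p \<in> set qs" "q \<in> set qs" "p \<noteq> q"
      then obtain i k where "i < j" "k < j" "p = qs ! i" "q = qs ! k" using lq by (auto simp: in_set_conv_nth)
      then show "set p \<inter> set q \<inter> N = {}" using ndisj[of i k] \<open>p \<noteq> q\<close> by auto
    qed
  qed
  then have "j \<le> sig" using distinct_card[OF dq] lq by simp
  then show ?thesis using cut cC by auto
qed

lemma mincut_card: "is_min_cut_N src trg s t E N C \<Longrightarrow> card C = sig"
proof -
  assume m: "is_min_cut_N src trg s t E N C"
  obtain C0 where "is_cut_N src trg s t E N C0" "card C0 \<le> sig" using menger by blast
  then have "card C \<le> sig" using m unfolding is_min_cut_N_def by fastforce
  moreover have "sig \<le> card C" using m cut_ge unfolding is_min_cut_N_def by blast
  ultimately show ?thesis by simp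
qed


lemma gamma_ge:
  assumes "P \<subseteq> st_paths src trg s t (S \<union> (E - N))" "pairwise (\<lambda>p q. set p \<inter> set q = {}) P"
  shows "card P \<le> gamma src trg s t E N S"
proof -
  let ?G = "{card P | P. P \<subseteq> st_paths src trg s t (S \<union> (E - N)) \<and> pairwise (\<lambda>p q. set p \<inter> set q = {}) P}"
  have "?G \<subseteq> {..card (st_paths src trg s t (S \<union> (E - N)))}"
  proof
    fix x assume "x \<in> ?G"
    then obtain P where "x = card P" "P \<subseteq> st_paths src trg s t (S \<union> (E - N))" by blast
    from \<open>P \<subseteq> _\<close> have "card P \<le> card (st_paths src trg s t (S \<union> (E - N)))" by (rule card_mono[OF finite_st_paths])
    then show "x \<in> {..card (st_paths src trg s t (S \<union> (E - N)))}" using \<open>x = card P\<close> by simp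
  qed
  then have fin: "finite ?G" by (rule finite_subset) simp
  have "card P \<in> ?G" using assms by blast
  then show ?thesis unfolding gamma_def by (rule Max_ge[OF fin])
qed

lemma inc_core: "is_min_cut_N src trg s t E N C \<Longrightarrow> incidence_vec C \<in> core_tilde src trg s t E N"
proof -
  assume m: "is_min_cut_N src trg s t E N C"
  have c: "is_cut_N src trg s t E N C" using m unfolding is_min_cut_N_def by blast
  have CN: "C \<subseteq> N" using c unfolding is_cut_N_def by blast
  have cs: "card C = sig" using mincut_card[OF m] .
  have z: "\<forall>i. i \<notin> N \<longrightarrow> incidence_vec C $ i = 0" using CN by auto
  have nn: "\<forall>i\<in>N. 0 \<le> incidence_vec C $ i" by simp
  have sm: "(\<Sum>i\<in>N. incidence_vec C $ i) = real sig"
    using sum_ind[of N C] CN cs by (simp add: Int_absorb1)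
  have g: "\<forall>S. S \<subseteq> N \<longrightarrow> (\<Sum>i\<in>S. incidence_vec C $ i) \<ge> real (gamma_tilde src trg s t E N S)"
  proof (intro allI impI)
    fix S assume S: "S \<subseteq> N"
    have e: "(\<Sum>i\<in>S. incidence_vec C $ i) = real (card (C \<inter> S))"
      using sum_ind[of S C] by (simp add: Int_commute)
    show "(\<Sum>i\<in>S. incidence_vec C $ i) \<ge> real (gamma_tilde src trg s t E N S)"
    proof (cases "S = N")
      case True
      then show ?thesis using e cs CN by (simp add: gamma_tilde_def Int_absorb2)
    next
      case False
      then show ?thesis using e gamma_le[OF c S] by (simp add: gamma_tilde_def)
    qed
  qed
  show ?thesis unfolding core_tilde_def using z nn sm g by blast
qed

lemma core_convex: "convex (core_tilde src trg s t E N)"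
  unfolding convex_def
proof (intro ballI allI impI)
  fix x y :: "real ^ 'e" and u v :: real
  assume x: "x \<in> core_tilde src trg s t E N" and y: "y \<in> core_tilde src trg s t E N"
    and uv: "0 \<le> u" "0 \<le> v" "u + v = 1"
  have comb: "\<And>S. (\<Sum>i\<in>S. (u *\<^sub>R x + v *\<^sub>R y) $ i) = u * (\<Sum>i\<in>S. x $ i) + v * (\<Sum>i\<in>S. y $ i)"
    by (simp add: sum.distrib sum_distrib_left)
  have ge: "\<And>a b g. g \<le> a \<Longrightarrow> g \<le> b \<Longrightarrow> g \<le> u * a + v * b"
  proof -
    fix a b g :: real assume "g \<le> a" "g \<le> b"
    then have "u * g \<le> u * a" "v * g \<le> v * b" using uv by (simp_all add: mult_left_mono)
    then have "u * g + v * g \<le> u * a + v * b" by linarith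
    moreover have "u * g + v * g = g" using uv by (metis distrib_right mult_1)
    ultimately show "g \<le> u * a + v * b" by simp
  qed
  have x1: "\<forall>i. i \<notin> N \<longrightarrow> x $ i = 0" "\<forall>i\<in>N. 0 \<le> x $ i" "(\<Sum>i\<in>N. x $ i) = real sig"
    "\<forall>S. S \<subseteq> N \<longrightarrow> (\<Sum>i\<in>S. x $ i) \<ge> real (gamma_tilde src trg s t E N S)"
    using x unfolding core_tilde_def by blast+
  have y1: "\<forall>i. i \<notin> N \<longrightarrow> y $ i = 0" "\<forall>i\<in>N. 0 \<le> y $ i" "(\<Sum>i\<in>N. y $ i) = real sig"
    "\<forall>S. S \<subseteq> N \<longrightarrow> (\<Sum>i\<in>S. y $ i) \<ge> real (gamma_tilde src trg s t E N S)"
    using y unfolding core_tilde_def by blast+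
  have "\<forall>i. i \<notin> N \<longrightarrow> (u *\<^sub>R x + v *\<^sub>R y) $ i = 0" using x1(1) y1(1) by simp
  moreover have "\<forall>i\<in>N. 0 \<le> (u *\<^sub>R x + v *\<^sub>R y) $ i" using x1(2) y1(2) ge[of 0] by simp
  moreover have "(\<Sum>i\<in>N. (u *\<^sub>R x + v *\<^sub>R y) $ i) = real sig"
    using comb[of N] x1(3) y1(3) uv by (metis distrib_right mult_1)
  moreover have "\<forall>S. S \<subseteq> N \<longrightarrow> (\<Sum>i\<in>S. (u *\<^sub>R x + v *\<^sub>R y) $ i) \<ge> real (gamma_tilde src trg s t E N S)"
    using comb x1(4) y1(4) ge by simp
  ultimately show "u *\<^sub>R x + v *\<^sub>R y \<in> core_tilde src trg s t E N" unfolding core_tilde_def by blast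
qed

lemma hull_sub_core: "convex hull {incidence_vec C | C. is_min_cut_N src trg s t E N C} \<subseteq> core_tilde src trg s t E N"
  by (rule hull_minimal) (use inc_core core_convex in auto)

definition "QQ x \<longleftrightarrow> (\<forall>i. i \<notin> N \<longrightarrow> x $ i = 0) \<and> (\<forall>i\<in>N. 0 \<le> x $ i) \<and> (\<Sum>i\<in>N. x $ i) = real sig \<and>
   (\<forall>p\<in>SP. (\<Sum>i\<in>set p \<inter> N. x $ i) \<ge> 1)"

lemma core_QQ: "x \<in> core_tilde src trg s t E N \<Longrightarrow> QQ x"
proof -
  assume x: "x \<in> core_tilde src trg s t E N"
  have x1: "\<forall>i. i \<notin> N \<longrightarrow> x $ i = 0" "\<forall>i\<in>N. 0 \<le> x $ i" "(\<Sum>i\<in>N. x $ i) = real sig"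
    "\<forall>S. S \<subseteq> N \<longrightarrow> (\<Sum>i\<in>S. x $ i) \<ge> real (gamma_tilde src trg s t E N S)"
    using x unfolding core_tilde_def by blast+
  have "(\<Sum>i\<in>set p \<inter> N. x $ i) \<ge> 1" if p: "p \<in> SP" for p
  proof -
    let ?S = "set p \<inter> N"
    have pE: "set p \<subseteq> E" using p unfolding st_paths_def is_st_path_def by blast
    have "1 \<le> gamma_tilde src trg s t E N ?S"
    proof (cases "?S = N")
      case True
      have "card {p} \<le> sig" by (rule sig_ge) (use p in auto)
      then show ?thesis using True by (simp add: gamma_tilde_def)
    next
      case False
      have "p \<in> st_paths src trg s t (?S \<union> (E - N))"
        using p pE unfolding st_paths_def is_st_path_def by auto
      then have "card {p} \<le> gamma src trg s t E N ?S" by (intro gamma_ge) auto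
      then show ?thesis using False by (simp add: gamma_tilde_def)
    qed
    then show ?thesis using x1(4) by (metis inf_le2 of_nat_1 of_nat_le_iff order_trans)
  qed
  then show "QQ x" unfolding QQ_def using x1 by blast
qed


definition "mu x = card {i\<in>N. x $ i \<noteq> 0} + card {p\<in>SP. (\<Sum>i\<in>set p \<inter> N. x $ i) \<noteq> 1}"

lemma drop_notin: "distinct p \<Longrightarrow> i < k \<Longrightarrow> k < length p \<Longrightarrow> p ! i \<notin> set (drop k p)"
proof
  assume d: "distinct p" and ik: "i < k" "k < length p" and m: "p ! i \<in> set (drop k p)"
  then obtain m where m: "m < length (drop k p)" "drop k p ! m = p ! i" by (auto simp: in_set_conv_nth)
  then have "p ! (k + m) = p ! i" using ik by simp
  moreover have "k + m < length p" using m(1) by simp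
  ultimately have "k + m = i" using d ik by (simp add: nth_eq_iff_index_eq)
  then show False using ik by simp
qed

lemma walk_to_path: "gw src trg E {} s t w \<Longrightarrow> \<exists>q. q \<in> SP \<and> set q \<subseteq> set w"
proof -
  assume "gw src trg E {} s t w"
  from gw_simple[OF this] obtain q where q: "gw src trg E {} s t q" "set q \<subseteq> set w" "distinct (s # map trg q)"
    by auto
  have "q \<noteq> []" using q(1) st by (cases q) auto
  then have "q \<in> SP" using q unfolding st_paths_def st_path_iff by simp
  then show ?thesis using q(2) by blast
qed

lemma QQ_hull: "QQ x \<Longrightarrow> x \<in> convex hull {incidence_vec C | C. is_min_cut_N src trg s t E N C}"
proof (induction "mu x" arbitrary: x rule: less_induct)
  case less
  let ?H = "{incidence_vec C | C. is_min_cut_N src trg s t E N C}"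
  have x0: "\<forall>i. i \<notin> N \<longrightarrow> x $ i = 0" and xnn: "\<forall>i\<in>N. 0 \<le> x $ i"
    and xs: "(\<Sum>i\<in>N. x $ i) = real sig" and xpath: "\<forall>p\<in>SP. (\<Sum>i\<in>set p \<inter> N. x $ i) \<ge> 1"
    using less.prems unfolding QQ_def by blast+
  have xnn': "0 \<le> x $ i" for i using x0 xnn by (cases "i \<in> N") auto
  define xp where "xp p = (\<Sum>i\<in>set p \<inter> N. x $ i)" for p
  have xp1: "p \<in> SP \<Longrightarrow> 1 \<le> xp p" for p using xpath unfolding xp_def by blast
  obtain P0 where P0: "P0 \<subseteq> SP" "pairwise (\<lambda>p q. set p \<inter> set q \<inter> N = {}) P0" "card P0 = sig"
    using sig_att by blast
  have fP0: "finite P0" using finite_subset[OF P0(1) finite_st_paths] .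
  define U where "U = (\<Union>p\<in>P0. set p \<inter> N)"
  have UN: "U \<subseteq> N" unfolding U_def by blast
  have dis: "\<forall>p\<in>P0. \<forall>q\<in>P0. p \<noteq> q \<longrightarrow> (set p \<inter> N) \<inter> (set q \<inter> N) = {}"
    using P0(2) unfolding pairwise_def by blast
  have sumU: "(\<Sum>i\<in>U. x $ i) = (\<Sum>p\<in>P0. xp p)"
    unfolding U_def xp_def by (rule sum.UNION_disjoint[OF fP0]) (simp, rule dis)
  have ge1: "(\<Sum>p\<in>P0. (1::real)) \<le> (\<Sum>p\<in>P0. xp p)"
    by (rule sum_mono) (use xp1 P0(1) in blast)
  have s1: "(\<Sum>p\<in>P0. (1::real)) = real sig" using P0(3) by simp
  have splitN: "(\<Sum>i\<in>N. x $ i) = (\<Sum>i\<in>N - U. x $ i) + (\<Sum>i\<in>U. x $ i)"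
    using sum.subset_diff[OF UN finite] .
  have nU: "(\<Sum>i\<in>N - U. x $ i) \<ge> 0" by (rule sum_nonneg) (rule xnn')
  have NU0: "(\<Sum>i\<in>N - U. x $ i) = 0" using splitN nU xs sumU ge1 s1 by linarith
  have zNU: "\<forall>i\<in>N - U. x $ i = 0" using NU0 sum_nonneg_eq_0_iff[of "N - U" "\<lambda>i. x $ i"] xnn' by simp
  have tP: "\<forall>p\<in>P0. xp p = 1"
  proof -
    have "(\<Sum>p\<in>P0. xp p - 1) = 0" using splitN NU0 xs sumU s1 by (simp add: sum_subtractf)
    moreover have "\<forall>p\<in>P0. 0 \<le> xp p - 1" using xp1 P0(1) by auto
    ultimately show ?thesis using sum_nonneg_eq_0_iff[OF fP0, of "\<lambda>p. xp p - 1"] by simp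
  qed
  define Z where "Z = {a\<in>E. x $ a = 0}"
  define A where "A = {v. \<exists>w. gw src trg Z {} s v w}"
  define C where "C = {a\<in>E. src a \<in> A \<and> trg a \<notin> A}"
  have ZE: "Z \<subseteq> E" unfolding Z_def by blast
  have sA: "s \<in> A" unfolding A_def by (rule CollectI, rule exI[of _ "[]"], simp)
  have zp: "(\<Sum>i\<in>set w \<inter> N. x $ i) = 0" if "gw src trg Z {} s v w" for v w
  proof -
    have "set w \<subseteq> Z" using gw_set[OF that] .
    then show ?thesis unfolding Z_def by (intro sum.neutral) auto
  qed
  have mono: "(\<Sum>i\<in>S \<inter> N. x $ i) \<le> (\<Sum>i\<in>T \<inter> N. x $ i)" if "S \<subseteq> T" for S T
    by (rule sum_mono2) (use that xnn' in auto)
  have tA: "t \<notin> A"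
  proof
    assume "t \<in> A"
    then obtain w where w: "gw src trg Z {} s t w" unfolding A_def by blast
    obtain q where q: "q \<in> SP" "set q \<subseteq> set w" using walk_to_path[OF gw_mono[OF w ZE]] by blast
    have "xp q \<le> 0" using mono[OF q(2)] zp[OF w] unfolding xp_def by simp
    then show False using xp1[OF q(1)] by simp
  qed
  have Cpos: "a \<in> N \<and> 0 < x $ a" if a: "a \<in> C" for a
  proof -
    have aE: "a \<in> E" and sa: "src a \<in> A" and ta: "trg a \<notin> A" using a unfolding C_def by blast+
    have "x $ a \<noteq> 0"
    proof
      assume "x $ a = 0"
      then have aZ: "a \<in> Z" unfolding Z_def using aE by blast
      obtain w where "gw src trg Z {} s (src a) w" using sa unfolding A_def by blast
      from gw_snoc[OF this aZ] have "gw src trg Z {} s (trg a) (w @ [a])" by simp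
      then show False using ta unfolding A_def by blast
    qed
    then show ?thesis using x0 xnn' by (metis less_eq_real_def)
  qed
  have CN: "C \<subseteq> N" using Cpos by blast
  have cut: "is_cut_N src trg s t E N C"
    unfolding is_cut_N_def
  proof
    show "C \<subseteq> N" by (rule CN)
    show "\<forall>p\<in>SP. set p \<inter> C \<noteq> {}"
    proof
      fix p assume "p \<in> SP"
      then have g: "gw src trg E {} s t p" unfolding st_paths_def st_path_iff by simp
      obtain a where a: "a \<in> set p" "src a \<in> A" "trg a \<notin> A" using gw_cross[OF g sA tA] by auto
      have "a \<in> E" using gw_set[OF g] a(1) by blast
      then show "set p \<inter> C \<noteq> {}" using a unfolding C_def by blast
    qed
  qed
  have pC: "set p \<inter> C \<noteq> {}" if "p \<in> SP" for p using cut that unfolding is_cut_N_def by blast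
  have once: "card (set p \<inter> C) = 1" if p: "p \<in> SP" and xp: "xp p = 1" for p
  proof -
    have g: "gw src trg E {} s t p" using p unfolding st_paths_def st_path_iff by simp
    have dp: "distinct p" using st_path_distinct[OF p] .
    have no2: False if ik: "i < k" "k < length p" "p ! i \<in> C" "p ! k \<in> C" for i k
    proof -
      have "src (p ! k) \<in> A" using ik(4) unfolding C_def by blast
      then obtain w where w: "gw src trg Z {} s (src (p ! k)) w" unfolding A_def by blast
      have gd: "gw src trg E {} (src (p ! k)) t (drop k p)" using gw_drop[OF g ik(2)] by simp
      have "gw src trg E {} s t (w @ drop k p)" by (rule gw_append[OF gw_mono[OF w ZE] gd])
      then obtain q where q: "q \<in> SP" "set q \<subseteq> set (w @ drop k p)" using walk_to_path by blast
      have "xp q \<le> (\<Sum>i\<in>(set w \<union> set (drop k p)) \<inter> N. x $ i)" using mono[OF q(2)] unfolding xp_def by simp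
      also have "\<dots> = (\<Sum>i\<in>(set w \<inter> N) \<union> (set (drop k p) \<inter> N). x $ i)" by (simp add: Int_Un_distrib2)
      also have "\<dots> \<le> (\<Sum>i\<in>set w \<inter> N. x $ i) + (\<Sum>i\<in>set (drop k p) \<inter> N. x $ i)"
      proof -
        have "(\<Sum>i\<in>(set w \<inter> N) \<inter> (set (drop k p) \<inter> N). x $ i) \<ge> 0" by (rule sum_nonneg) (rule xnn')
        then show ?thesis by (simp add: sum_Un)
      qed
      also have "\<dots> = (\<Sum>i\<in>set (drop k p) \<inter> N. x $ i)" using zp[OF w] by simp
      also have "\<dots> \<le> (\<Sum>i\<in>(set p - {p ! i}) \<inter> N. x $ i)"
      proof (rule mono)
        show "set (drop k p) \<subseteq> set p - {p ! i}" using drop_notin[OF dp ik(1,2)] set_drop_subset by fastforce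
      qed
      also have "\<dots> = xp p - x $ (p ! i)"
      proof -
        have pi: "p ! i \<in> set p \<inter> N" using ik CN by auto
        have "(set p - {p ! i}) \<inter> N = (set p \<inter> N) - {p ! i}" by blast
        then show ?thesis unfolding xp_def using sum.remove[OF _ pi, of "\<lambda>i. x $ i"] by simp
      qed
      also have "\<dots> < 1" using xp Cpos[OF ik(3)] by simp
      finally show False using xp1[OF q(1)] by simp
    qed
    obtain a where a: "a \<in> set p \<inter> C" using pC[OF p] by blast
    have "set p \<inter> C = {a}"
    proof
      show "{a} \<subseteq> set p \<inter> C" using a by blast
      show "set p \<inter> C \<subseteq> {a}"
      proof
        fix b assume b: "b \<in> set p \<inter> C"
        obtain i where i: "i < length p" "p ! i = a" using a by (auto simp: in_set_conv_nth)
        obtain k where k: "k < length p" "p ! k = b" using b by (auto simp: in_set_conv_nth)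
        have "\<not> i < k" using no2[of i k] i k a b by blast
        moreover have "\<not> k < i" using no2[of k i] i k a b by blast
        ultimately have "i = k" by simp
        then show "b \<in> {a}" using i k by simp
      qed
    qed
    then show ?thesis by simp
  qed
  have cardC: "card C = sig"
  proof -
    have "C \<subseteq> (\<Union>p\<in>P0. set p \<inter> C)"
    proof
      fix a assume a: "a \<in> C"
      have "a \<in> U" using Cpos[OF a] zNU by force
      then show "a \<in> (\<Union>p\<in>P0. set p \<inter> C)" using a unfolding U_def by blast
    qed
    then have "card C \<le> card (\<Union>p\<in>P0. set p \<inter> C)" by (rule card_mono[rotated]) simp
    also have "\<dots> \<le> (\<Sum>p\<in>P0. card (set p \<inter> C))" by (rule card_UN_le[OF fP0])
    also have "\<dots> = (\<Sum>p\<in>P0. 1)" using once tP P0(1) by (intro sum.cong) auto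
    also have "\<dots> = sig" using P0(3) by simp
    finally show ?thesis using cut_ge[OF cut] by simp
  qed
  have minC: "is_min_cut_N src trg s t E N C" unfolding is_min_cut_N_def using cut cardC cut_ge by auto
  have incH: "incidence_vec C \<in> convex hull ?H" by (rule hull_inc) (use minC in blast)
  show ?case
  proof (cases "x = incidence_vec C")
    case True
    then show ?thesis using incH by simp
  next
    case False

    define PP where "PP = {p\<in>SP. 2 \<le> card (set p \<inter> C)}"
    define rt where "rt p = (xp p - 1) / (real (card (set p \<inter> C)) - 1)" for p
    define L where "L = (\<lambda>e. x $ e) ` C \<union> rt ` PP"
    define lam where "lam = Min L"
    have fC: "finite C" by simp
    have ncard: "\<And>S. finite S \<Longrightarrow> (\<Sum>i\<in>S. if i \<in> C then lam else 0) = lam * real (card (S \<inter> C))"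
    proof -
      fix S :: "'e set" assume fS: "finite S"
      have "(\<Sum>i\<in>S. if i \<in> C then lam else 0) = (\<Sum>i\<in>S. lam * (if i \<in> C then 1 else 0))"
        by (rule sum.cong) auto
      also have "\<dots> = lam * (\<Sum>i\<in>S. if i \<in> C then 1 else 0)" by (simp add: sum_distrib_left)
      also have "\<dots> = lam * real (card (S \<inter> C))" using sum_ind[OF fS] by simp
      finally show "(\<Sum>i\<in>S. if i \<in> C then lam else 0) = lam * real (card (S \<inter> C))" .
    qed
    have Cne: "C \<noteq> {}"
    proof
      assume C0: "C = {}"
      then have "sig = 0" using cardC by simp
      then have "(\<Sum>i\<in>N. x $ i) = 0" using xs by simp
      then have "\<forall>i\<in>N. x $ i = 0" using sum_nonneg_eq_0_iff[of N "\<lambda>i. x $ i"] xnn' by simp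
      then have "x = incidence_vec C" using x0 C0 by (simp add: vec_eq_iff) (metis)
      then show False using False by simp
    qed
    have fPP: "finite PP" unfolding PP_def by (rule finite_subset[OF _ finite_st_paths]) blast
    have finL: "finite L" unfolding L_def using fPP by simp
    have neL: "L \<noteq> {}" unfolding L_def using Cne by simp
    have PPgt: "1 < xp p" if "p \<in> PP" for p
    proof -
      have p: "p \<in> SP" "2 \<le> card (set p \<inter> C)" using that unfolding PP_def by blast+
      have "xp p \<noteq> 1" using once[OF p(1)] p(2) by fastforce
      then show ?thesis using xp1[OF p(1)] by simp
    qed
    have posL: "\<forall>l\<in>L. 0 < l"
    proof
      fix l assume "l \<in> L"
      then consider (a) e where "e \<in> C" "l = x $ e" | (b) p where "p \<in> PP" "l = rt p" unfolding L_def by blast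
      then show "0 < l"
      proof cases
        case a then show ?thesis using Cpos by blast
      next
        case b
        have "2 \<le> card (set p \<inter> C)" using b(1) unfolding PP_def by blast
        then have "0 < real (card (set p \<inter> C)) - 1" by simp
        moreover have "0 < xp p - 1" using PPgt[OF b(1)] by simp
        ultimately show ?thesis using b(2) unfolding rt_def by simp
      qed
    qed
    have lam_pos: "0 < lam" unfolding lam_def using posL finL neL by (simp add: Min_gr_iff)
    have lam_le: "lam \<le> l" if "l \<in> L" for l unfolding lam_def using finL that by (rule Min_le)
    have lam_in: "lam \<in> L" unfolding lam_def using finL neL by (rule Min_in)
    have lam_x: "lam \<le> x $ e" if "e \<in> C" for e using lam_le that unfolding L_def by blast
    have lam_lt1: "lam < 1"
    proof (rule ccontr)
      assume "\<not> lam < 1"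
      then have ge: "\<forall>e\<in>C. 1 \<le> x $ e" using lam_x by force
      have sp: "(\<Sum>i\<in>N. x $ i) = (\<Sum>i\<in>N - C. x $ i) + (\<Sum>i\<in>C. x $ i)"
        using sum.subset_diff[OF CN finite] .
      have a1: "(\<Sum>i\<in>N - C. x $ i) \<ge> 0" by (rule sum_nonneg) (rule xnn')
      have a2: "(\<Sum>i\<in>C. x $ i - 1) \<ge> 0" by (rule sum_nonneg) (use ge in simp)
      have a3: "(\<Sum>i\<in>C. x $ i - 1) = (\<Sum>i\<in>C. x $ i) - real sig" using cardC by (simp add: sum_subtractf)
      have b1: "(\<Sum>i\<in>N - C. x $ i) = 0" using sp a1 a2 a3 xs by linarith
      have b2: "(\<Sum>i\<in>C. x $ i - 1) = 0" using sp a1 a2 a3 xs by linarith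
      have c1: "\<forall>i\<in>N - C. x $ i = 0" using b1 sum_nonneg_eq_0_iff[of "N - C" "\<lambda>i. x $ i"] xnn' by simp
      have c2: "\<forall>i\<in>C. x $ i = 1" using b2 sum_nonneg_eq_0_iff[of C "\<lambda>i. x $ i - 1"] ge by simp
      have "x = incidence_vec C"
      proof (subst vec_eq_iff, intro allI)
        fix i show "x $ i = incidence_vec C $ i"
          using c1 c2 x0 CN by (cases "i \<in> C"; cases "i \<in> N") auto
      qed
      then show False using False by simp
    qed
    define y where "y = (1 / (1 - lam)) *\<^sub>R (x - lam *\<^sub>R incidence_vec C)"
    have ynth: "y $ i = (x $ i - (if i \<in> C then lam else 0)) / (1 - lam)" for i
      unfolding y_def by (simp add: divide_inverse mult.commute)
    have l1: "0 < 1 - lam" using lam_lt1 by simp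
    have xcomb: "x = lam *\<^sub>R incidence_vec C + (1 - lam) *\<^sub>R y"
    proof (subst vec_eq_iff, intro allI)
      fix i show "x $ i = (lam *\<^sub>R incidence_vec C + (1 - lam) *\<^sub>R y) $ i"
        using l1 by (simp add: ynth)
    qed
    have ysum: "(\<Sum>i\<in>S. y $ i) = ((\<Sum>i\<in>S. x $ i) - lam * real (card (S \<inter> C))) / (1 - lam)" for S
    proof -
      have "(\<Sum>i\<in>S. y $ i) = (\<Sum>i\<in>S. x $ i - (if i \<in> C then lam else 0)) / (1 - lam)"
        by (simp add: ynth sum_divide_distrib)
      also have "\<dots> = ((\<Sum>i\<in>S. x $ i) - lam * real (card (S \<inter> C))) / (1 - lam)"
        by (simp add: sum_subtractf ncard)
      finally show ?thesis .
    qed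
    have Qy: "QQ y" unfolding QQ_def
    proof (intro conjI)
      show "\<forall>i. i \<notin> N \<longrightarrow> y $ i = 0" using x0 CN by (auto simp: ynth)
      show "\<forall>i\<in>N. 0 \<le> y $ i"
      proof
        fix i assume "i \<in> N"
        have "0 \<le> x $ i - (if i \<in> C then lam else 0)" using lam_x xnn' by simp
        then show "0 \<le> y $ i" using l1 by (simp add: ynth)
      qed
      show "(\<Sum>i\<in>N. y $ i) = real sig"
      proof -
        have "card (N \<inter> C) = sig" using cardC CN by (simp add: Int_absorb1)
        then have "(\<Sum>i\<in>N. y $ i) = (real sig - lam * real sig) / (1 - lam)" using ysum[of N] xs by simp
        also have "\<dots> = real sig" using l1 by (simp add: field_simps)
        finally show ?thesis .
      qed
      show "\<forall>p\<in>SP. 1 \<le> (\<Sum>i\<in>set p \<inter> N. y $ i)"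
      proof
        fix p assume p: "p \<in> SP"
        define k where "k = card (set p \<inter> C)"
        have kk: "card (set p \<inter> N \<inter> C) = k" unfolding k_def using CN by (metis Int_assoc Int_absorb1)
        have k1: "1 \<le> k" unfolding k_def using pC[OF p] by (simp add: Suc_le_eq card_gt_0_iff)
        have "1 - lam \<le> xp p - lam * real k"
        proof (cases "k = 1")
          case True then show ?thesis using xp1[OF p] by simp
        next
          case False
          then have "p \<in> PP" using k1 p unfolding PP_def k_def by simp
          then have "lam \<le> rt p" using lam_le unfolding L_def by blast
          moreover have "0 < real k - 1" using False k1 by simp
          ultimately have "lam * (real k - 1) \<le> xp p - 1" unfolding rt_def k_def by (simp add: pos_le_divide_eq)
          then show ?thesis by (simp add: algebra_simps)
        qed
        then have "1 \<le> (xp p - lam * real k) / (1 - lam)" using l1 by simp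
        then show "1 \<le> (\<Sum>i\<in>set p \<inter> N. y $ i)" using ysum[of "set p \<inter> N"] kk unfolding xp_def by simp
      qed
    qed
    have yp: "(\<Sum>i\<in>set p \<inter> N. y $ i) = (xp p - lam * real (card (set p \<inter> C))) / (1 - lam)" for p
    proof -
      have "card (set p \<inter> N \<inter> C) = card (set p \<inter> C)" using CN by (metis Int_assoc Int_absorb1)
      then show ?thesis using ysum[of "set p \<inter> N"] unfolding xp_def by simp
    qed
    have sub1: "{i\<in>N. y $ i \<noteq> 0} \<subseteq> {i\<in>N. x $ i \<noteq> 0}"
    proof
      fix i assume i: "i \<in> {i\<in>N. y $ i \<noteq> 0}"
      have "x $ i \<noteq> 0"
      proof
        assume "x $ i = 0"
        then have "i \<notin> C" using Cpos by force
        then show False using i \<open>x $ i = 0\<close> by (simp add: ynth)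
      qed
      then show "i \<in> {i\<in>N. x $ i \<noteq> 0}" using i by blast
    qed
    have sub2: "{p\<in>SP. (\<Sum>i\<in>set p \<inter> N. y $ i) \<noteq> 1} \<subseteq> {p\<in>SP. (\<Sum>i\<in>set p \<inter> N. x $ i) \<noteq> 1}"
    proof
      fix p assume p: "p \<in> {p\<in>SP. (\<Sum>i\<in>set p \<inter> N. y $ i) \<noteq> 1}"
      have "xp p \<noteq> 1"
      proof
        assume x1: "xp p = 1"
        then have "card (set p \<inter> C) = 1" using once p by blast
        then have "(\<Sum>i\<in>set p \<inter> N. y $ i) = 1" using yp[of p] x1 l1 by simp
        then show False using p by blast
      qed
      then show "p \<in> {p\<in>SP. (\<Sum>i\<in>set p \<inter> N. x $ i) \<noteq> 1}" using p unfolding xp_def by blast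
    qed
    have fin1: "finite {i\<in>N. x $ i \<noteq> 0}" by simp
    have fin2: "finite {p\<in>SP. (\<Sum>i\<in>set p \<inter> N. x $ i) \<noteq> 1}" by (rule finite_subset[OF _ finite_st_paths]) blast
    have "mu y < mu x"
    proof -
      from lam_in consider (a) e where "e \<in> C" "lam = x $ e" | (b) p where "p \<in> PP" "lam = rt p"
        unfolding L_def by blast
      then show ?thesis
      proof cases
        case a
        have "y $ e = 0" using a by (simp add: ynth)
        moreover have "e \<in> N" "x $ e \<noteq> 0" using Cpos[OF a(1)] by auto
        ultimately have "{i\<in>N. y $ i \<noteq> 0} \<subset> {i\<in>N. x $ i \<noteq> 0}" using sub1 by blast
        then have "card {i\<in>N. y $ i \<noteq> 0} < card {i\<in>N. x $ i \<noteq> 0}" by (rule psubset_card_mono[OF fin1])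
        moreover have "card {p\<in>SP. (\<Sum>i\<in>set p \<inter> N. y $ i) \<noteq> 1} \<le> card {p\<in>SP. (\<Sum>i\<in>set p \<inter> N. x $ i) \<noteq> 1}"
          by (rule card_mono[OF fin2 sub2])
        ultimately show ?thesis unfolding mu_def by simp
      next
        case b
        have pS: "p \<in> SP" and k2: "2 \<le> card (set p \<inter> C)" using b(1) unfolding PP_def by blast+
        define k where "k = card (set p \<inter> C)"
        have kpos: "0 < real k - 1" using k2 unfolding k_def by simp
        have "lam * (real k - 1) = xp p - 1" using b(2) kpos unfolding rt_def k_def by simp
        then have "xp p - lam * real k = 1 - lam" by (simp add: algebra_simps)
        then have "(\<Sum>i\<in>set p \<inter> N. y $ i) = 1" using yp[of p] l1 unfolding k_def by simp
        moreover have "xp p \<noteq> 1" using PPgt[OF b(1)] by simp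
        ultimately have "{p\<in>SP. (\<Sum>i\<in>set p \<inter> N. y $ i) \<noteq> 1} \<subset> {p\<in>SP. (\<Sum>i\<in>set p \<inter> N. x $ i) \<noteq> 1}"
          using sub2 pS unfolding xp_def by blast
        then have "card {p\<in>SP. (\<Sum>i\<in>set p \<inter> N. y $ i) \<noteq> 1} < card {p\<in>SP. (\<Sum>i\<in>set p \<inter> N. x $ i) \<noteq> 1}"
          by (rule psubset_card_mono[OF fin2])
        moreover have "card {i\<in>N. y $ i \<noteq> 0} \<le> card {i\<in>N. x $ i \<noteq> 0}" by (rule card_mono[OF fin1 sub1])
        ultimately show ?thesis unfolding mu_def by simp
      qed
    qed
    then have yH: "y \<in> convex hull ?H" using less.hyps Qy by blast
    have "lam *\<^sub>R incidence_vec C + (1 - lam) *\<^sub>R y \<in> convex hull ?H"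
      by (rule convexD[OF convex_convex_hull incH yH]) (use lam_pos lam_lt1 in auto)
    then show ?thesis using xcomb by simp
  qed
qed

end


theorem lemma6:
  fixes V :: "'v set" and E N :: "'e::finite set" and src trg :: "'e \<Rightarrow> 'v" and s t :: 'v
  assumes "finite E"
    and "s \<in> V" and "t \<in> V" and "s \<noteq> t"
    and "\<forall>a\<in>E. src a \<in> V \<and> trg a \<in> V"
    and "N \<subseteq> E"
    and "\<forall>p \<in> st_paths src trg s t E. set p \<inter> N \<noteq> {}"
    and "\<forall>a\<in>E. \<exists>p \<in> st_paths src trg s t E. a \<in> set p"
  shows "core_tilde src trg s t E N =
         convex hull {incidence_vec C | C. is_min_cut_N src trg s t E N C}"
proof
  show "core_tilde src trg s t E N \<subseteq> convex hull {incidence_vec C | C. is_min_cut_N src trg s t E N C}"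
  proof
    fix x assume x: "x \<in> core_tilde src trg s t E N"
    show "x \<in> convex hull {incidence_vec C | C. is_min_cut_N src trg s t E N C}"
      by (rule QQ_hull[OF assms(4) assms(6) assms(7) core_QQ[OF assms(4) assms(6) assms(7) x]])
  qed
  show "convex hull {incidence_vec C | C. is_min_cut_N src trg s t E N C} \<subseteq> core_tilde src trg s t E N"
    by (rule hull_sub_core[OF assms(4) assms(6) assms(7)])
qed

end
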